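(* In the setting below, if $\eta \geq \eta_0$ and an oscillation happens at iteration $t$, then $\hat{w}_t \leq \eta/\gamma$.
   Context: Dimension $d=2$. Data $x_1,\dots,x_n\in\mathbb{R}^2$ with $\|x_i\|\le 1$, linearly separable (some $w$ has $\langle w,x_i\rangle>0$ for all $i$). $F(w) = \frac{1}{n}\sum_{i=1}^n \log(1+\exp(-\langle w, x_i\rangle))$. Maximum margin $\gamma = \max_{\|w\|=1}\min_i \langle w, x_i\rangle$ with maximizer the unit vector $w_*$; $v_*$ is a fixed unit vector orthogonal to $w_*$. Gradient descent: $w_0=0$, $w_{t+1} = w_t - \eta\nabla F(w_t)$ with constant $\eta>0$. $\hat{w}_t = \langle w_t, w_*\rangle$, $\tilde{w}_t = \langle w_t, v_*\rangle$. $\eta_0 = \max(n, \frac{32}{\gamma^2}\log\frac{256}{\gamma^2})$. $\lambda = \frac{1}{\gamma}\log\frac{1}{\exp(1/(8\eta))-1}$. An oscillation happens at iteration $t\ge 0$ if all of: (1) $\hat{w}_t \geq \lambda$; (2) $F(w_t) > 1/(8\eta)$ and $F(w_{t+1}) > 1/(8\eta)$; (3) $\tilde{w}_{t+1}\tilde{w}_t < 0$. *)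

theory Defs
  imports "HOL-Analysis.Analysis"
begin

definition logloss :: "nat \<Rightarrow> (nat \<Rightarrow> real^2) \<Rightarrow> real^2 \<Rightarrow> real" where
  "logloss n x w = (1 / real n) * (\<Sum>i<n. ln (1 + exp (- (w \<bullet> x i))))"

definition logloss_grad :: "nat \<Rightarrow> (nat \<Rightarrow> real^2) \<Rightarrow> real^2 \<Rightarrow> real^2" where
  "logloss_grad n x w = (1 / real n) *\<^sub>R (\<Sum>i<n. (- 1 / (1 + exp (w \<bullet> x i))) *\<^sub>R x i)"

primrec gd :: "nat \<Rightarrow> (nat \<Rightarrow> real^2) \<Rightarrow> real \<Rightarrow> nat \<Rightarrow> real^2" where
  "gd n x \<eta> 0 = 0"
| "gd n x \<eta> (Suc t) = gd n x \<eta> t - \<eta> *\<^sub>R logloss_grad n x (gd n x \<eta> t)"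

definition max_margin :: "nat \<Rightarrow> (nat \<Rightarrow> real^2) \<Rightarrow> real" where
  "max_margin n x = (SUP w \<in> {w. norm w = 1}. Min ((\<lambda>i. w \<bullet> x i) ` {..<n}))"

definition eta0 :: "nat \<Rightarrow> real \<Rightarrow> real" where
  "eta0 n \<gamma> = max (real n) (32 / \<gamma>\<^sup>2 * ln (256 / \<gamma>\<^sup>2))"

definition lam :: "real \<Rightarrow> real \<Rightarrow> real" where
  "lam \<eta> \<gamma> = (1 / \<gamma>) * ln (1 / (exp (1 / (8 * \<eta>)) - 1))"

definition oscillation ::
  "nat \<Rightarrow> (nat \<Rightarrow> real^2) \<Rightarrow> real \<Rightarrow> real^2 \<Rightarrow> real^2 \<Rightarrow> nat \<Rightarrow> bool" where
  "oscillation n x \<eta> ws vs t \<longleftrightarrow>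
     (let \<gamma> = max_margin n x; w = gd n x \<eta> in
       w t \<bullet> ws \<ge> lam \<eta> \<gamma> \<and>
       logloss n x (w t) > 1 / (8 * \<eta>) \<and> logloss n x (w (Suc t)) > 1 / (8 * \<eta>) \<and>
       (w (Suc t) \<bullet> vs) * (w t \<bullet> vs) < 0)"

end

theory Submission
  imports Defs
begin
lemma alg2:
  fixes p1 p2 q1 q2 a1 a2 b1 b2 :: real
  assumes A: "p1 * p1 + p2 * p2 = 1" and B: "q1 * q1 + q2 * q2 = 1" and C: "q1 * p1 + q2 * p2 = 0"
  shows "(a1 * p1 + a2 * p2) * (b1 * p1 + b2 * p2) + (a1 * q1 + a2 * q2) * (b1 * q1 + b2 * q2) = a1 * b1 + a2 * b2"
proof -
  define d where "d = p1 * q2 - p2 * q1"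
  have e1: "d * p1 - q2 = q2 * ((p1 * p1 + p2 * p2) - 1) - p2 * (q1 * p1 + q2 * p2)"
    unfolding d_def by algebra
  have h1: "q2 = d * p1" using e1 A C by simp
  have e2: "- d * p2 - q1 = q1 * ((p1 * p1 + p2 * p2) - 1) - p1 * (q1 * p1 + q2 * p2)"
    unfolding d_def by algebra
  have h2: "q1 = - d * p2" using e2 A C by simp
  have e3: "d * d - 1 = (p1 * p1 + p2 * p2) * (q1 * q1 + q2 * q2) - (q1 * p1 + q2 * p2)^2 - 1"
    unfolding d_def by algebra
  have h3: "d * d = 1" using e3 A B C by simp
  have e4: "(a1 * p1 + a2 * p2) * (b1 * p1 + b2 * p2) + (a1 * (- d * p2) + a2 * (d * p1)) * (b1 * (- d * p2) + b2 * (d * p1)) - (a1 * b1 + a2 * b2)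
     = (a1 * b1 + a2 * b2) * ((p1 * p1 + p2 * p2) - 1) + (a1*p2-a2*p1)*(b1*p2-b2*p1)*(d*d - 1)"
    by algebra
  show ?thesis using e4 h1 h2 h3 A by simp
qed

lemma decomp2:
  fixes u v a b :: "real^2"
  assumes "norm u = 1" "norm v = 1" "v \<bullet> u = 0"
  shows "a \<bullet> b = (a \<bullet> u) * (b \<bullet> u) + (a \<bullet> v) * (b \<bullet> v)"
proof -
  have "u \<bullet> u = 1" "v \<bullet> v = 1" using assms(1,2) by (simp_all add: dot_square_norm)
  then show ?thesis using assms(3) alg2[of "u$1" "u$2" "v$1" "v$2" "a$1" "a$2" "b$1" "b$2"]
    by (simp add: inner_vec_def sum_2 algebra_simps)
qed

lemma gd_step:
  "gd n x \<eta> (Suc t) \<bullet> u = gd n x \<eta> t \<bullet> u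
     + \<eta> / real n * (\<Sum>i<n. (1 / (1 + exp (gd n x \<eta> t \<bullet> x i))) * (x i \<bullet> u))"
  proof -
  have "gd n x \<eta> (Suc t) = gd n x \<eta> t + (\<eta> / real n) *\<^sub>R (\<Sum>i<n. (1 / (1 + exp (gd n x \<eta> t \<bullet> x i))) *\<^sub>R x i)"
  proof -
    have "(\<Sum>i<n. (- 1 / (1 + exp (gd n x \<eta> t \<bullet> x i))) *\<^sub>R x i) = - (\<Sum>i<n. (1 / (1 + exp (gd n x \<eta> t \<bullet> x i))) *\<^sub>R x i)"
      by (simp add: sum_negf[symmetric])
    then have "logloss_grad n x (gd n x \<eta> t) = - ((1 / real n) *\<^sub>R (\<Sum>i<n. (1 / (1 + exp (gd n x \<eta> t \<bullet> x i))) *\<^sub>R x i))"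
      unfolding logloss_grad_def by simp
    then show ?thesis by simp
  qed
  then show ?thesis by (simp del: gd.simps add: inner_add_left inner_sum_left)
qed

lemma loss_big:
  fixes n :: nat
  assumes "n \<ge> 1" "logloss n x w > c"
  shows "\<exists>i<n. ln (1 + exp (- (w \<bullet> x i))) > c"
proof (rule ccontr)
  assume "\<not> ?thesis"
  hence "\<forall>i\<in>{..<n}. ln (1 + exp (- (w \<bullet> x i))) \<le> c" by auto
  hence "(\<Sum>i<n. ln (1 + exp (- (w \<bullet> x i)))) \<le> real n * c"
    using sum_bounded_above[of "{..<n}" "\<lambda>i. ln (1 + exp (- (w \<bullet> x i)))" c] by simp
  hence "logloss n x w \<le> c" using assms(1) by (simp add: logloss_def field_simps)
  thus False using assms(2) by simp
qed

lemma loss_pt: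
  fixes z c :: real
  assumes "c > 0" "ln (1 + exp (- z)) > c"
  shows "z < ln (1 / (exp c - 1))"
proof -
  have pos: "exp c - 1 > 0" using assms(1) by simp
  have "exp c < 1 + exp (- z)" using assms(2)
    by (metis exp_less_cancel_iff exp_ln add_pos_pos exp_gt_zero zero_less_one)
  hence "exp c - 1 < exp (- z)" by simp
  hence "ln (exp c - 1) < - z" using pos by (metis ln_less_cancel_iff exp_gt_zero ln_exp)
  moreover have "ln (1 / (exp c - 1)) = - ln (exp c - 1)" using pos by (simp add: ln_div)
  ultimately show ?thesis by simp
qed

lemma ln_bound:
  fixes e :: real assumes "e \<ge> 32" shows "ln (8 * e) \<le> e / 2"
proof -
  have "ln (8 * e) = ln (32 * (e / 4))" by simp
  also have "\<dots> = ln 32 + ln (e / 4)" using assms by (intro ln_mult_pos) auto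
  finally have "ln (8 * e) = ln 32 + ln (e / 4)" .
  moreover have "ln (e / 4) \<le> e / 4 - 1" using assms by (intro ln_le_minus_one) simp
  moreover have "ln (32::real) = 5 * ln 2" using ln_realpow[of 2 5] by simp
  moreover have "ln (2::real) \<le> 1" using ln_le_minus_one[of 2] by simp
  ultimately show ?thesis using assms by linarith
qed


lemma wt_bound:
  fixes v :: "real^2"
  assumes n1: "n \<ge> 1" and xb: "\<forall>i<n. norm (x i) \<le> 1"
    and ws: "norm ws = 1" and vs: "norm vs = 1" "vs \<bullet> ws = 0"
    and marg: "\<forall>i<n. ws \<bullet> x i \<ge> g" and c: "c > 0"
    and L: "g * l = ln (1 / (exp c - 1))"
    and loss: "logloss n x v > c" and vl: "v \<bullet> ws \<ge> l" and vp: "v \<bullet> ws > 0"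
  shows "\<bar>v \<bullet> vs\<bar> > g * (v \<bullet> ws - l)"
proof -
  obtain i where i: "i < n" "ln (1 + exp (- (v \<bullet> x i))) > c" using loss_big[OF n1 loss] by blast
  have lt: "v \<bullet> x i < g * l" using loss_pt[OF c i(2)] L by simp
  have dec: "v \<bullet> x i = (v \<bullet> ws) * (x i \<bullet> ws) + (v \<bullet> vs) * (x i \<bullet> vs)"
    using decomp2[OF ws vs] by blast
  have "(v \<bullet> ws) * (x i \<bullet> ws) \<ge> (v \<bullet> ws) * g"
    using marg i(1) vp by (simp add: inner_commute)
  have xv: "\<bar>x i \<bullet> vs\<bar> \<le> 1"
  proof -
    have "norm (x i) \<le> 1" using xb i(1) by auto
    thus ?thesis using Cauchy_Schwarz_ineq2[of "x i" vs] vs by simp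
  qed
  have "(v \<bullet> vs) * (x i \<bullet> vs) < g * l - (v \<bullet> ws) * g"
    using lt dec \<open>(v \<bullet> ws) * (x i \<bullet> ws) \<ge> (v \<bullet> ws) * g\<close> by linarith
  moreover have "\<bar>(v \<bullet> vs) * (x i \<bullet> vs)\<bar> \<le> \<bar>v \<bullet> vs\<bar>"
    using xv by (simp add: abs_mult mult_left_le)
  ultimately show ?thesis by (simp add: algebra_simps)
qed

theorem lemma4:
  fixes n :: nat and x :: "nat \<Rightarrow> real^2" and \<eta> :: real and ws vs :: "real^2" and t :: nat
  assumes "n \<ge> 1"
    and "\<forall>i<n. norm (x i) \<le> 1"
    and "\<exists>w. \<forall>i<n. w \<bullet> x i > 0"
    and "norm ws = 1"
    and "Min ((\<lambda>i. ws \<bullet> x i) ` {..<n}) = max_margin n x"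
    and "norm vs = 1" and "vs \<bullet> ws = 0"
    and "\<eta> > 0"
    and "\<eta> \<ge> eta0 n (max_margin n x)"
    and "oscillation n x \<eta> ws vs t"
  shows "gd n x \<eta> t \<bullet> ws \<le> \<eta> / max_margin n x"
proof -
  define g where "g = max_margin n x"
  define w where "w = gd n x \<eta> t"
  define w' where "w' = gd n x \<eta> (Suc t)"
  have n1: "n \<ge> 1" and xb: "\<forall>i<n. norm (x i) \<le> 1" using assms by auto
  have fin: "finite ((\<lambda>i. ws \<bullet> x i) ` {..<n})" and ne: "(\<lambda>i. ws \<bullet> x i) ` {..<n} \<noteq> {}"
    using n1 by (auto simp: lessThan_empty_iff)
  have marg: "\<forall>i<n. ws \<bullet> x i \<ge> g"
    using Min_le[OF fin] assms(5) unfolding g_def by auto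
  have cs: "\<And>u i. norm u = 1 \<Longrightarrow> i < n \<Longrightarrow> u \<bullet> x i \<le> 1"
  proof -
    fix u :: "real^2" and i assume "norm u = 1" "i < n"
    then show "u \<bullet> x i \<le> 1"
      using norm_cauchy_schwarz[of u "x i"] xb by auto
  qed
  have g1: "g \<le> 1" using marg cs[OF assms(4), of 0] n1 by force
  have gpos: "g > 0"
  proof -
    obtain w0 where w0: "\<forall>i<n. w0 \<bullet> x i > 0" using assms(3) by blast
    have "w0 \<noteq> 0" using w0 n1 by (metis inner_zero_left less_irrefl less_le_trans zero_less_one)
    define u where "u = w0 /\<^sub>R norm w0"
    have nu: "norm u = 1" using \<open>w0 \<noteq> 0\<close> by (simp add: u_def)
    have "\<forall>i<n. u \<bullet> x i > 0" using w0 \<open>w0 \<noteq> 0\<close> by (simp add: u_def)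
    hence mpos: "Min ((\<lambda>i. u \<bullet> x i) ` {..<n}) > 0" using n1 by (subst Min_gr_iff) (auto simp: lessThan_empty_iff)
    have bdd: "bdd_above ((\<lambda>w. Min ((\<lambda>i. w \<bullet> x i) ` {..<n})) ` {w. norm w = 1})"
    proof (rule bdd_aboveI2)
      fix w :: "real^2" assume "w \<in> {w. norm w = 1}"
      then have "Min ((\<lambda>i. w \<bullet> x i) ` {..<n}) \<le> w \<bullet> x 0" using n1 by (intro Min_le) auto
      also have "\<dots> \<le> 1" using cs \<open>w \<in> {w. norm w = 1}\<close> n1 by auto
      finally show "Min ((\<lambda>i. w \<bullet> x i) ` {..<n}) \<le> 1" .
    qed
    have "Min ((\<lambda>i. u \<bullet> x i) ` {..<n}) \<le> g"
      unfolding g_def max_margin_def using nu by (intro cSUP_upper[OF _ bdd]) auto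
    with mpos show ?thesis by simp
  qed
  have e32: "\<eta> \<ge> 32"
  proof -
    have g2: "g^2 \<le> 1" "g^2 > 0" using g1 gpos by (auto simp: power_le_one)
    have a: "32 / g^2 \<ge> 32" using g2 by (simp add: field_simps)
    have "256 / g^2 \<ge> 256" using g2 by (simp add: field_simps)
    hence "ln (256 / g^2) \<ge> ln 256" using g2 by (subst ln_le_cancel_iff) auto
    moreover have "ln (256::real) \<ge> 1"
      using ln_ge_iff[of 256 1] exp_le by (simp add: ln_ge_iff)
    ultimately have "ln (256 / g^2) \<ge> 1" by simp
    hence "32 / g^2 * ln (256 / g^2) \<ge> 32 * 1" using a by (intro mult_mono) auto
    thus ?thesis using assms(9) unfolding eta0_def g_def by simp
  qed
  define c where "c = 1 / (8 * \<eta>)"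
  have c: "c > 0" using assms(8) by (simp add: c_def)
  define l where "l = lam \<eta> g"
  have L: "g * l = ln (1 / (exp c - 1))" using gpos by (simp add: l_def lam_def c_def)
  have Lb: "g * l \<le> \<eta> / 2"
  proof -
    have "exp c - 1 \<ge> c" using exp_ge_add_one_self[of c] by linarith
    hence "1 / (exp c - 1) \<le> 1 / c" using c by (intro divide_left_mono) auto
    hence "ln (1 / (exp c - 1)) \<le> ln (1 / c)" using c \<open>exp c - 1 \<ge> c\<close>
      by (subst ln_le_cancel_iff) auto
    also have "1 / c = 8 * \<eta>" by (simp add: c_def)
    finally show ?thesis using L ln_bound[OF e32] by simp
  qed
  have osc: "w \<bullet> ws \<ge> l" "logloss n x w > c" "logloss n x w' > c" "(w' \<bullet> vs) * (w \<bullet> vs) < 0"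
    using assms(10) unfolding oscillation_def Let_def w_def w'_def l_def g_def c_def by auto
  show ?thesis
  proof (cases "w \<bullet> ws \<le> 0")
    case True
    then show ?thesis using gpos assms(8) unfolding w_def g_def by (smt (verit) divide_pos_pos)
  next
    case False
    hence wp: "w \<bullet> ws > 0" by simp
    define gi where "gi i = 1 / (1 + exp (w \<bullet> x i))" for i
    have gi: "0 < gi i \<and> gi i \<le> 1" for i
    proof -
      have e: "0 < exp (w \<bullet> x i)" by simp
      have aux: "1 / a \<le> 1" if "a \<ge> 1" for a :: real using that by simp
      have "1 / (1 + exp (w \<bullet> x i)) \<le> 1" using e by (intro aux) linarith
      moreover have "0 < 1 / (1 + exp (w \<bullet> x i))" using e by (simp add: add_pos_pos)
      ultimately show ?thesis by (simp add: gi_def)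
    qed
    have stp: "\<And>u. w' \<bullet> u = w \<bullet> u + \<eta> / real n * (\<Sum>i<n. gi i * (x i \<bullet> u))"
      unfolding w_def w'_def gi_def by (rule gd_step)
    have "(\<Sum>i<n. gi i * (x i \<bullet> ws)) \<ge> 0"
      using gi marg gpos by (intro sum_nonneg) (smt (verit) inner_commute lessThan_iff mult_nonneg_nonneg)
    hence mono: "w' \<bullet> ws \<ge> w \<bullet> ws" using stp[of ws] assms(8) by simp
    have "\<bar>\<Sum>i<n. gi i * (x i \<bullet> vs)\<bar> \<le> (\<Sum>i<n. \<bar>gi i * (x i \<bullet> vs)\<bar>)" by (rule sum_abs)
    also have "\<dots> \<le> (\<Sum>i<n. 1)"
    proof (rule sum_mono)
      fix i assume "i \<in> {..<n}"
      hence "norm (x i) \<le> 1" using xb by auto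
      hence "\<bar>x i \<bullet> vs\<bar> \<le> 1" using Cauchy_Schwarz_ineq2[of "x i" vs] assms(6) by simp
      thus "\<bar>gi i * (x i \<bullet> vs)\<bar> \<le> 1" using gi[of i] by (simp add: abs_mult mult_le_one)
    qed
    finally have sb: "\<bar>\<Sum>i<n. gi i * (x i \<bullet> vs)\<bar> \<le> real n" by simp
    have diff: "\<bar>w' \<bullet> vs - w \<bullet> vs\<bar> \<le> \<eta>"
    proof -
      have "\<bar>w' \<bullet> vs - w \<bullet> vs\<bar> = \<eta> / real n * \<bar>\<Sum>i<n. gi i * (x i \<bullet> vs)\<bar>"
        using stp[of vs] assms(8) by (simp add: abs_mult)
      also have "\<dots> \<le> \<eta> / real n * real n" using sb assms(8) by (intro mult_left_mono) auto
      also have "\<dots> = \<eta>" using n1 by simp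
      finally show ?thesis .
    qed
    have b1: "\<bar>w \<bullet> vs\<bar> > g * (w \<bullet> ws - l)"
      by (rule wt_bound[OF n1 xb assms(4) assms(6) assms(7) marg c L osc(2) osc(1) wp])
    have b2: "\<bar>w' \<bullet> vs\<bar> > g * (w' \<bullet> ws - l)"
      by (rule wt_bound[OF n1 xb assms(4) assms(6) assms(7) marg c L osc(3)]) (use osc(1) mono wp in auto)
    have b3: "g * (w' \<bullet> ws - l) \<ge> g * (w \<bullet> ws - l)" using mono gpos by (simp add: mult_left_mono)
    have "\<bar>w' \<bullet> vs - w \<bullet> vs\<bar> = \<bar>w' \<bullet> vs\<bar> + \<bar>w \<bullet> vs\<bar>"
      using osc(4) by (smt (verit) mult_nonneg_nonneg mult_nonpos_nonpos)
    hence "2 * (g * (w \<bullet> ws - l)) < \<eta>" using b1 b2 b3 diff by linarith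
    hence "g * (w \<bullet> ws) < \<eta>" using Lb by (simp add: algebra_simps)
    hence "w \<bullet> ws < \<eta> / g" using gpos by (simp add: field_simps)
    thus ?thesis unfolding w_def g_def by simp
  qed
qed

end
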